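(* Let $s,d,k\ge1$ and let $I=(G,D,\mathsf{cost},\mathsf{supply},\mathsf{demand})$ be an $(s,d)$-decent instance of Min Weight Generalized Domination with minimum solution cost $\mathsf{OPT}$. Let $V_0,\dots,V_{k-1}\subseteq V(G)$ be such that the sets $N_G[V_0],\dots,N_G[V_{k-1}]$ are pairwise disjoint, and for each $j$ let $I_j=\mathsf{Clear}(I;V_j)$. Then (1) for every $j\in\{0,\dots,k-1\}$, $I_j$ is $(s,d)$-decent and has a solution of cost at most $\mathsf{OPT}$; and (2) there exists $j\in\{0,\dots,k-1\}$ such that every solution to $I_j$ has cost at least $(1-\frac1k)\mathsf{OPT}$.
   Context: An instance of Min Weight Generalized Domination consists of a loopless multigraph $G$ and for every vertex $u$: a finite domain $D_u$, $\mathsf{cost}_u\colon D_u\to\mathbb{R}_{\ge0}\cup\{+\infty\}$, and $\mathsf{supply}_u,\mathsf{demand}_u\colon D_u\to 2^{\delta(u)}$ ($\delta(u)$ = edges incident to $u$), with some $s_u\in D_u$ having $\mathsf{supply}_u(s_u)=\delta(u)$ and finite cost. A solution is $\phi$ with $\phi(u)\in D_u$ such that for every edge $e$ with endpoints $u,v$, $e\in\mathsf{demand}_u(\phi(u))\Rightarrow e\in\mathsf{supply}_v(\phi(v))$ and $e\in\mathsf{demand}_v(\phi(v))\Rightarrow e\in\mathsf{supply}_u(\phi(u))$; cost $\sum_u\mathsf{cost}_u(\phi(u))$. A vertex is $(s,d)$-meager if $|\delta(u)|\le s$ and $|D_u|\le d$; state-monotonous if for all ordered $x_1,x_2\in D_u$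 there is $x\in D_u$ with $\mathsf{cost}_u(x)\le\mathsf{cost}_u(x_1)+\mathsf{cost}_u(x_2)$, $\mathsf{supply}_u(x)=\mathsf{supply}_u(x_1)\cup\mathsf{supply}_u(x_2)$, $\mathsf{demand}_u(x)\subseteq\mathsf{demand}_u(x_1)$. The instance is $(s,d)$-decent if all vertices are $(s,d)$-meager and state-monotonous. For $A\subseteq V(G)$, $N_G[A]$ is the closed neighborhood of $A$. $\mathsf{Clear}(I;A)$ is obtained from $I$ by deleting all edges with both endpoints in $A$ (also from all supply and demand sets) and then setting $\mathsf{demand}_u(x)=\emptyset$ for every $u\in A$ and every $x\in D_u$. *)

theory Defs
  imports Main "HOL-Library.Extended_Nonnegative_Real"
begin

text \<open>The multigraph has vertex set
  verts, edge set edges, and each edge e has the set of its endpoints ends e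
  (exactly two distinct vertices, so the multigraph is loopless; parallel edges are
  distinct elements of edges).\<close>

record ('v, 'e, 's) gd_inst =
  verts  :: "'v set"
  edges  :: "'e set"
  ends   :: "'e \<Rightarrow> 'v set"
  Dom    :: "'v \<Rightarrow> 's set"
  cost   :: "'v \<Rightarrow> 's \<Rightarrow> ennreal"
  supplies :: "'v \<Rightarrow> 's \<Rightarrow> 'e set"
  demands :: "'v \<Rightarrow> 's \<Rightarrow> 'e set"

definition delta :: "('v, 'e, 's) gd_inst \<Rightarrow> 'v \<Rightarrow> 'e set" where
  "delta I u = {e \<in> edges I. u \<in> ends I e}"

definition gd_instance :: "('v, 'e, 's) gd_inst \<Rightarrow> bool" where
  "gd_instance I \<longleftrightarrow>
     finite (verts I) \<and> finite (edges I) \<and>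
     (\<forall>e\<in>edges I. ends I e \<subseteq> verts I \<and> card (ends I e) = 2) \<and>
     (\<forall>u\<in>verts I. finite (Dom I u) \<and>
        (\<forall>x\<in>Dom I u. supplies I u x \<subseteq> delta I u \<and> demands I u x \<subseteq> delta I u) \<and>
        (\<exists>s\<in>Dom I u. supplies I u s = delta I u \<and> cost I u s < \<infinity>))"

definition is_solution :: "('v, 'e, 's) gd_inst \<Rightarrow> ('v \<Rightarrow> 's) \<Rightarrow> bool" where
  "is_solution I \<phi> \<longleftrightarrow>
     (\<forall>u\<in>verts I. \<phi> u \<in> Dom I u) \<and>
     (\<forall>e\<in>edges I. \<forall>u v. ends I e = {u, v} \<longrightarrow>
        (e \<in> demands I u (\<phi> u) \<longrightarrow> e \<in> supplies I v (\<phi> v)))"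

definition sol_cost :: "('v, 'e, 's) gd_inst \<Rightarrow> ('v \<Rightarrow> 's) \<Rightarrow> ennreal" where
  "sol_cost I \<phi> = (\<Sum>u\<in>verts I. cost I u (\<phi> u))"

definition OPT :: "('v, 'e, 's) gd_inst \<Rightarrow> ennreal" where
  "OPT I = Inf {sol_cost I \<phi> | \<phi>. is_solution I \<phi>}"

definition meager :: "nat \<Rightarrow> nat \<Rightarrow> ('v, 'e, 's) gd_inst \<Rightarrow> 'v \<Rightarrow> bool" where
  "meager s d I u \<longleftrightarrow> card (delta I u) \<le> s \<and> card (Dom I u) \<le> d"

definition state_monotonous :: "('v, 'e, 's) gd_inst \<Rightarrow> 'v \<Rightarrow> bool" where
  "state_monotonous I u \<longleftrightarrow>
     (\<forall>x1\<in>Dom I u. \<forall>x2\<in>Dom I u. \<exists>x\<in>Dom I u.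
        cost I u x \<le> cost I u x1 + cost I u x2 \<and>
        supplies I u x = supplies I u x1 \<union> supplies I u x2 \<and>
        demands I u x \<subseteq> demands I u x1)"

definition decent :: "nat \<Rightarrow> nat \<Rightarrow> ('v, 'e, 's) gd_inst \<Rightarrow> bool" where
  "decent s d I \<longleftrightarrow> (\<forall>u\<in>verts I. meager s d I u \<and> state_monotonous I u)"

definition closed_nbhd :: "('v, 'e, 's) gd_inst \<Rightarrow> 'v set \<Rightarrow> 'v set" where
  "closed_nbhd I A = A \<union> {v \<in> verts I. \<exists>e\<in>edges I. \<exists>a\<in>A. ends I e = {a, v}}"

definition Clear :: "('v, 'e, 's) gd_inst \<Rightarrow> 'v set \<Rightarrow> ('v, 'e, 's) gd_inst" where
  "Clear I A =
     (let E' = {e \<in> edges I. \<not> ends I e \<subseteq> A} in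
      I\<lparr> edges := E',
         supplies := (\<lambda>u x. supplies I u x \<inter> E'),
         demands := (\<lambda>u x. if u \<in> A then {} else demands I u x \<inter> E') \<rparr>)"

end

theory Submission imports Defs begin

lemma Clear_simps:
 "verts (Clear I A) = verts I" "ends (Clear I A) = ends I" "Dom (Clear I A) = Dom I" "cost (Clear I A) = cost I"
 "edges (Clear I A) = {e \<in> edges I. \<not> ends I e \<subseteq> A}"
 "supplies (Clear I A) u x = supplies I u x \<inter> {e \<in> edges I. \<not> ends I e \<subseteq> A}"
 "demands (Clear I A) u x = (if u \<in> A then {} else demands I u x \<inter> {e \<in> edges I. \<not> ends I e \<subseteq> A})"
  by (simp_all add: Clear_def Let_def)

lemma delta_Clear: "delta (Clear I A) u = delta I u \<inter> {e \<in> edges I. \<not> ends I e \<subseteq> A}"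
  by (auto simp: delta_def Clear_simps)

lemma sol_cost_Clear: "sol_cost (Clear I A) \<phi> = sol_cost I \<phi>"
  by (simp add: sol_cost_def Clear_simps)

lemma gd_Clear: "gd_instance I \<Longrightarrow> gd_instance (Clear I A)"
  unfolding gd_instance_def Clear_simps delta_Clear
  by (auto 0 4)

lemma decent_Clear:
  assumes "gd_instance I" "decent s d I" shows "decent s d (Clear I A)"
  unfolding decent_def
proof
  fix u assume u: "u \<in> verts (Clear I A)"
  hence u': "u \<in> verts I" by (simp add: Clear_simps)
  have fin: "finite (delta I u)" using assms(1) unfolding gd_instance_def delta_def by auto
  have m: "meager s d I u" "state_monotonous I u" using assms(2) u' by (auto simp: decent_def)
  have "meager s d (Clear I A) u"
    using m(1) card_mono[OF fin, of "delta I u \<inter> {e \<in> edges I. \<not> ends I e \<subseteq> A}"]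
    by (auto simp: meager_def delta_Clear Clear_simps)
  moreover have "state_monotonous (Clear I A) u"
    unfolding state_monotonous_def Clear_simps
  proof (intro ballI)
    fix x1 x2 assume "x1 \<in> Dom I u" "x2 \<in> Dom I u"
    then obtain x where "x \<in> Dom I u" "cost I u x \<le> cost I u x1 + cost I u x2"
        "supplies I u x = supplies I u x1 \<union> supplies I u x2" "demands I u x \<subseteq> demands I u x1"
      using m(2) unfolding state_monotonous_def by blast
    thus "\<exists>x\<in>Dom I u. cost I u x \<le> cost I u x1 + cost I u x2 \<and>
         supplies I u x \<inter> {e \<in> edges I. \<not> ends I e \<subseteq> A} =
         supplies I u x1 \<inter> {e \<in> edges I. \<not> ends I e \<subseteq> A} \<union> supplies I u x2 \<inter> {e \<in> edges I. \<not> ends I e \<subseteq> A} \<and>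
         (if u \<in> A then {} else demands I u x \<inter> {e \<in> edges I. \<not> ends I e \<subseteq> A})
         \<subseteq> (if u \<in> A then {} else demands I u x1 \<inter> {e \<in> edges I. \<not> ends I e \<subseteq> A})"
      by (intro bexI[of _ x]) auto
  qed
  ultimately show "meager s d (Clear I A) u \<and> state_monotonous (Clear I A) u" by blast
qed

lemma sol_Clear: "is_solution I \<phi> \<Longrightarrow> is_solution (Clear I A) \<phi>"
  unfolding is_solution_def Clear_simps by auto

lemma opt_attained:
  assumes "gd_instance I"
  shows "\<exists>\<phi>. is_solution I \<phi> \<and> sol_cost I \<phi> = OPT I" "OPT I < top"
proof -
  let ?S = "{sol_cost I \<phi> |\<phi>. is_solution I \<phi>}"
  have fv: "finite (verts I)" and fD: "\<forall>u\<in>verts I. finite (Dom I u)"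
    using assms unfolding gd_instance_def by auto
  have "?S \<subseteq> (\<lambda>f. \<Sum>u\<in>verts I. cost I u (f u)) ` (PiE (verts I) (Dom I))"
  proof
    fix c assume "c \<in> ?S"
    then obtain \<phi> where \<phi>: "is_solution I \<phi>" "c = sol_cost I \<phi>" by blast
    have "restrict \<phi> (verts I) \<in> PiE (verts I) (Dom I)" using \<phi>(1) by (auto simp: is_solution_def)
    moreover have "c = (\<Sum>u\<in>verts I. cost I u (restrict \<phi> (verts I) u))"
      using \<phi>(2) by (simp add: sol_cost_def)
    ultimately show "c \<in> (\<lambda>f. \<Sum>u\<in>verts I. cost I u (f u)) ` (PiE (verts I) (Dom I))" by blast
  qed
  hence finS: "finite ?S" by (rule finite_subset) (use fv fD in \<open>auto intro!: finite_PiE\<close>)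
  define \<phi>0 where "\<phi>0 = (\<lambda>u. SOME x. x \<in> Dom I u \<and> supplies I u x = delta I u \<and> cost I u x < \<infinity>)"
  have \<phi>0: "\<phi>0 u \<in> Dom I u \<and> supplies I u (\<phi>0 u) = delta I u \<and> cost I u (\<phi>0 u) < \<infinity>" if "u \<in> verts I" for u
    unfolding \<phi>0_def by (rule someI_ex) (use assms that in \<open>auto simp: gd_instance_def\<close>)
  have sol0: "is_solution I \<phi>0"
    unfolding is_solution_def
  proof (intro conjI ballI allI impI)
    fix u assume "u \<in> verts I" thus "\<phi>0 u \<in> Dom I u" using \<phi>0 by blast
  next
    fix e u v assume e: "e \<in> edges I" "ends I e = {u, v}"
    hence "v \<in> verts I" using assms unfolding gd_instance_def by blast
    thus "e \<in> supplies I v (\<phi>0 v)" using \<phi>0 e by (auto simp: delta_def)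
  qed
  hence ne: "?S \<noteq> {}" by blast
  have eq: "OPT I = Min ?S" unfolding OPT_def by (rule cInf_eq_Min[OF finS ne])
  have "OPT I \<in> ?S" unfolding eq using Min_in[OF finS ne] .
  thus "\<exists>\<phi>. is_solution I \<phi> \<and> sol_cost I \<phi> = OPT I" by auto
  have "OPT I \<le> sol_cost I \<phi>0" unfolding eq using finS sol0 by (intro Min_le) auto
  also have "sol_cost I \<phi>0 < top" unfolding sol_cost_def using fv \<phi>0 by simp
  finally show "OPT I < top" .
qed


lemma key:
  assumes gd: "gd_instance I" and dec: "decent s d I" and AV: "A \<subseteq> verts I"
    and sol: "is_solution I \<phi>s" and psi: "is_solution (Clear I A) \<psi>"
  shows "OPT I \<le> sol_cost (Clear I A) \<psi> + (\<Sum>u\<in>closed_nbhd I A. cost I u (\<phi>s u))"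
proof -
  let ?N = "closed_nbhd I A"
  let ?E = "{e \<in> edges I. \<not> ends I e \<subseteq> A}"
  define comb where "comb = (\<lambda>u x1 x2. SOME x. x \<in> Dom I u \<and> cost I u x \<le> cost I u x1 + cost I u x2 \<and>
        supplies I u x = supplies I u x1 \<union> supplies I u x2 \<and> demands I u x \<subseteq> demands I u x1)"
  have comb: "comb u x1 x2 \<in> Dom I u \<and> cost I u (comb u x1 x2) \<le> cost I u x1 + cost I u x2 \<and>
        supplies I u (comb u x1 x2) = supplies I u x1 \<union> supplies I u x2 \<and> demands I u (comb u x1 x2) \<subseteq> demands I u x1"
    if "u \<in> verts I" "x1 \<in> Dom I u" "x2 \<in> Dom I u" for u x1 x2
    unfolding comb_def by (rule someI_ex)
      (use dec that in \<open>unfold decent_def state_monotonous_def, metis\<close>)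
  have NV: "?N \<subseteq> verts I" using AV unfolding closed_nbhd_def by auto
  have Ds: "\<phi>s u \<in> Dom I u" if "u \<in> verts I" for u using sol that by (auto simp: is_solution_def)
  have Dp: "\<psi> u \<in> Dom I u" if "u \<in> verts I" for u using psi that by (auto simp: is_solution_def Clear_simps)
  define \<phi> where "\<phi> = (\<lambda>u. if u \<in> A then comb u (\<phi>s u) (\<psi> u) else if u \<in> ?N then comb u (\<psi> u) (\<phi>s u) else \<psi> u)"
  have supp: "supplies I u (\<psi> u) \<subseteq> supplies I u (\<phi> u)" if "u \<in> verts I" for u
    using comb[OF that Ds[OF that] Dp[OF that]] comb[OF that Dp[OF that] Ds[OF that]]
    unfolding \<phi>_def by auto
  have suppN: "supplies I u (\<phi>s u) \<subseteq> supplies I u (\<phi> u)" if "u \<in> ?N" for u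
    using that NV comb[of u "\<phi>s u" "\<psi> u"] comb[of u "\<psi> u" "\<phi>s u"] Ds[of u] Dp[of u]
    unfolding \<phi>_def by (auto simp: closed_nbhd_def)
  have solphi: "is_solution I \<phi>"
    unfolding is_solution_def
  proof (intro conjI ballI allI impI)
    fix u assume u: "u \<in> verts I" thus "\<phi> u \<in> Dom I u"
      using comb[OF u Ds[OF u] Dp[OF u]] comb[OF u Dp[OF u] Ds[OF u]] Dp[OF u] unfolding \<phi>_def by auto
  next
    fix e u v assume e: "e \<in> edges I" "ends I e = {u, v}" and dem: "e \<in> demands I u (\<phi> u)"
    have uv: "u \<in> verts I" "v \<in> verts I" using gd e unfolding gd_instance_def by blast+
    show "e \<in> supplies I v (\<phi> v)"
    proof (cases "u \<in> A")
      case True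
      hence "e \<in> demands I u (\<phi>s u)" using dem comb[OF uv(1) Ds[OF uv(1)] Dp[OF uv(1)]]
        unfolding \<phi>_def by auto
      hence "e \<in> supplies I v (\<phi>s v)" using sol e unfolding is_solution_def by blast
      moreover have "v \<in> ?N" using True e uv unfolding closed_nbhd_def by blast
      ultimately show ?thesis using suppN by blast
    next
      case False
      have "e \<in> demands I u (\<psi> u)" using dem False comb[OF uv(1) Dp[OF uv(1)] Ds[OF uv(1)]]
        unfolding \<phi>_def by (auto split: if_splits)
      moreover have eE: "e \<in> ?E" using False e by auto
      ultimately have "e \<in> demands (Clear I A) u (\<psi> u)" using False by (simp add: Clear_simps)
      hence "e \<in> supplies (Clear I A) v (\<psi> v)"
        using psi e eE unfolding is_solution_def Clear_simps by blast
      thus ?thesis using supp[OF uv(2)] by (auto simp: Clear_simps)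
    qed
  qed
  have "OPT I \<le> sol_cost I \<phi>" unfolding OPT_def using solphi by (auto intro: Inf_lower)
  also have "\<dots> \<le> (\<Sum>u\<in>verts I. cost I u (\<psi> u) + (if u \<in> ?N then cost I u (\<phi>s u) else 0))"
    unfolding sol_cost_def
  proof (rule sum_mono)
    fix u assume u: "u \<in> verts I"
    show "cost I u (\<phi> u) \<le> cost I u (\<psi> u) + (if u \<in> ?N then cost I u (\<phi>s u) else 0)"
      using comb[OF u Ds[OF u] Dp[OF u]] comb[OF u Dp[OF u] Ds[OF u]] AV
      unfolding \<phi>_def by (auto simp: closed_nbhd_def add.commute)
  qed
  also have "\<dots> = sol_cost (Clear I A) \<psi> + (\<Sum>u\<in>?N. cost I u (\<phi>s u))"
    using NV gd sum.inter_restrict[of "verts I" "\<lambda>u. cost I u (\<phi>s u)" ?N, symmetric]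
    by (simp add: sum.distrib sol_cost_def Clear_simps Int_absorb1 gd_instance_def)
  finally show ?thesis .
qed


lemma arith_enn:
  fixes q p c :: ennreal and k :: nat
  assumes "q < top" "q \<le> p + c" "of_nat k * c \<le> q" "k \<ge> 1"
  shows "ennreal (1 - 1 / real k) * q \<le> p"
proof (cases "p = top")
  case True thus ?thesis by simp
next
  case False
  have k1: "1 \<le> (of_nat k::ennreal)" using assms(4) by simp
  have "1 * c \<le> of_nat k * c" by (rule mult_right_mono[OF k1]) simp
  hence "c \<le> of_nat k * c" by simp
  hence "c < top" using assms(1,3) by (meson order.trans le_less_trans)
  then obtain c' where c: "c = ennreal c'" "c' \<ge> 0" using less_top_ennreal by blast
  obtain q' where q: "q = ennreal q'" "q' \<ge> 0" using assms(1) less_top_ennreal by blast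
  obtain p' where p: "p = ennreal p'" "p' \<ge> 0" using False ennreal_cases[of p] by blast
  have pc: "p + c = ennreal (p' + c')" using p c by (simp add: ennreal_plus)
  have h1': "ennreal q' \<le> ennreal (p' + c')" using assms(2) unfolding q(1) pc .
  have h1: "q' \<le> p' + c'" using h1' p(2) c(2) by (metis ennreal_le_iff add_nonneg_nonneg)
  have e: "of_nat k * c = ennreal (real k * c')" using c by (simp add: ennreal_mult ennreal_of_nat_eq_real_of_nat)
  have h2: "real k * c' \<le> q'" using assms(3) q e c by (simp add: ennreal_le_iff)
  have kpos: "real k > 0" using assms(4) by simp
  have h3: "c' \<le> q' / real k" using h2 kpos by (simp add: field_simps mult.commute)
  have "(1 - 1 / real k) * q' = q' - q' / real k" by (simp add: algebra_simps)
  also have "\<dots> \<le> p'" using h1 h3 by linarith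
  finally have r: "(1 - 1 / real k) * q' \<le> p'" .
  have nn: "1 - 1 / real k \<ge> 0" using assms(4) by (simp add: field_simps)
  have "ennreal (1 - 1 / real k) * q = ennreal ((1 - 1 / real k) * q')" using q nn by (simp add: ennreal_mult)
  thus ?thesis using r q p by (simp add: ennreal_le_iff)
qed


theorem lemma4p3:
  fixes I :: "('v, 'e, 's) gd_inst" and s d k :: nat and Vs :: "nat \<Rightarrow> 'v set"
  assumes "s \<ge> 1" "d \<ge> 1" "k \<ge> 1"
    and "gd_instance I" and "decent s d I"
    and "\<forall>j<k. Vs j \<subseteq> verts I"
    and "\<forall>i<k. \<forall>j<k. i \<noteq> j \<longrightarrow> closed_nbhd I (Vs i) \<inter> closed_nbhd I (Vs j) = {}"
  shows "(\<forall>j<k. gd_instance (Clear I (Vs j)) \<and> decent s d (Clear I (Vs j)) \<and>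
            (\<exists>\<phi>. is_solution (Clear I (Vs j)) \<phi> \<and> sol_cost (Clear I (Vs j)) \<phi> \<le> OPT I))
       \<and> (\<exists>j<k. \<forall>\<phi>. is_solution (Clear I (Vs j)) \<phi> \<longrightarrow>
            ennreal (1 - 1 / real k) * OPT I \<le> sol_cost (Clear I (Vs j)) \<phi>)"
proof -
  obtain \<phi>s where sol: "is_solution I \<phi>s" and opt: "sol_cost I \<phi>s = OPT I"
    using opt_attained(1)[OF assms(4)] by blast
  have top: "OPT I < top" using opt_attained(2)[OF assms(4)] .
  have P1: "\<forall>j<k. gd_instance (Clear I (Vs j)) \<and> decent s d (Clear I (Vs j)) \<and>
            (\<exists>\<phi>. is_solution (Clear I (Vs j)) \<phi> \<and> sol_cost (Clear I (Vs j)) \<phi> \<le> OPT I)"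
    using gd_Clear[OF assms(4)] decent_Clear[OF assms(4,5)] sol_Clear[OF sol] opt
    by (auto simp: sol_cost_Clear intro!: exI[of _ \<phi>s])
  define c where "c = (\<lambda>j. \<Sum>u\<in>closed_nbhd I (Vs j). cost I u (\<phi>s u))"
  have fv: "finite (verts I)" using assms(4) by (simp add: gd_instance_def)
  have NV: "closed_nbhd I (Vs j) \<subseteq> verts I" if "j < k" for j
    using assms(6) that unfolding closed_nbhd_def by auto
  have fN: "finite (closed_nbhd I (Vs j))" if "j < k" for j using NV[OF that] fv finite_subset by blast
  have "(\<Sum>j<k. c j) = (\<Sum>u\<in>(\<Union>j\<in>{..<k}. closed_nbhd I (Vs j)). cost I u (\<phi>s u))"
    unfolding c_def using fN assms(7) by (intro sum.UNION_disjoint[symmetric]) auto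
  also have "\<dots> \<le> (\<Sum>u\<in>verts I. cost I u (\<phi>s u))"
    using fv NV by (intro sum_mono2) auto
  also have "\<dots> = OPT I" using opt by (simp add: sol_cost_def)
  finally have sumc: "(\<Sum>j<k. c j) \<le> OPT I" .
  have fin: "finite (c ` {..<k})" and ne: "c ` {..<k} \<noteq> {}" using assms(3) by (auto simp: lessThan_empty_iff)
  obtain j where j: "j < k" "c j = Min (c ` {..<k})" using Min_in[OF fin ne] by auto
  have jmin: "c j \<le> c i" if "i < k" for i using j(2) fin that by simp
  have "of_nat k * c j = (\<Sum>i<k. c j)" by simp
  also have "\<dots> \<le> (\<Sum>i<k. c i)" using jmin by (intro sum_mono) auto
  also have "\<dots> \<le> OPT I" by (rule sumc)
  finally have kc: "of_nat k * c j \<le> OPT I" .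
  have "\<forall>\<phi>. is_solution (Clear I (Vs j)) \<phi> \<longrightarrow>
            ennreal (1 - 1 / real k) * OPT I \<le> sol_cost (Clear I (Vs j)) \<phi>"
  proof (intro allI impI)
    fix \<psi> assume psi: "is_solution (Clear I (Vs j)) \<psi>"
    have "OPT I \<le> sol_cost (Clear I (Vs j)) \<psi> + c j"
      unfolding c_def using key[OF assms(4,5) _ sol psi] assms(6) j(1) by auto
    thus "ennreal (1 - 1 / real k) * OPT I \<le> sol_cost (Clear I (Vs j)) \<psi>"
      using arith_enn[OF top _ kc assms(3)] by blast
  qed
  with P1 j(1) show ?thesis by blast
qed

end
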